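(* In the setting of the context (with assumptions (A.1)–(A.3)), suppose the PMM generates infinite sequences $\{(u_k,v_k)\}$, $\{(z_k,w_k)\}$, $\{\gamma_k\}$, $\{\rho_k\}$; define $x_k=z_{k-1}+\lambda w_{k-1}+\lambda(Cv_k-d)$, $y_k=x_k-\lambda(w_{k-1}-Mu_k)$, and for $k\ge1$ the ergodic quantities $$\Gamma_k=\sum_{j=1}^k\rho_j\gamma_j,\quad \bar u_k=\frac1{\Gamma_k}\sum_{j=1}^k\rho_j\gamma_ju_j,\quad \bar v_k=\frac1{\Gamma_k}\sum_{j=1}^k\rho_j\gamma_jv_j,\quad \bar x_k=\frac1{\Gamma_k}\sum_{j=1}^k\rho_j\gamma_jx_j,\quad \bar y_k=\frac1{\Gamma_k}\sum_{j=1}^k\rho_j\gamma_jy_j,$$ $$\bar\epsilon_k^u=\frac1{\Gamma_k}\sum_{j=1}^k\rho_j\gamma_j\langle u_j-\bar u_k,-M^*y_j\rangle,\qquad \bar\epsilon_k^v=\frac1{\Gamma_k}\sum_{j=1}^k\rho_j\gamma_j\langle v_j-\bar v_k,-C^*x_j\rangle.$$ Then $\bar\epsilon_k^v\ge0$, $\bar\epsilon_k^u\ge0$, and $$0\in\partial_{\bar\epsilon_k^v}g(\bar v_k)+C^*\bar x_k,\qquad 0\in\partial_{\bar\epsilon_k^u}f(\bar u_k)+M^*\bar y_k.$$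
   Context: Let $f:\mathbb{R}^{m_1}\to(-\infty,\infty]$, $g:\mathbb{R}^{m_2}\to(-\infty,\infty]$ be proper closed convex, $M:\mathbb{R}^{m_1}\to\mathbb{R}^n$, $C:\mathbb{R}^{m_2}\to\mathbb{R}^n$ linear, $d\in\mathbb{R}^n$; consider $\min\{f(u)+g(v):Mu+Cv=d\}$ with Lagrangian $L(u,v,z)=f(u)+g(v)+\langle Mu+Cv-d,z\rangle$. A saddle point is $(u^*,v^*,z^* )$ with $L(u^*,v^*,z^* )$ finite and $\min_{(u,v)}L(u,v,z^* )=L(u^*,v^*,z^* )=\max_zL(u^*,v^*,z)$. $^*$ on functions denotes the Fenchel conjugate, on operators the adjoint. Standing assumptions: (A.1) $L$ has a saddle point; (A.2) $\mathrm{ri}(\mathrm{dom} f^* )\cap\mathrm{range}(M^* )\ne\emptyset$; (A.3) $\mathrm{ri}(\mathrm{dom} g^* )\cap\mathrm{range}(C^* )\ne\emptyset$. For $\epsilon\ge0$, the $\epsilon$-subdifferential is $\partial_\epsilon \theta(x)=\{s:\theta(x')\ge\theta(x)+\langle s,x'-x\rangle-\epsilon\ \forall x'\}$. PMM: given $(z_0,w_0)\in\mathbb{R}^n\times\mathbb{R}^n$, $\lambda>0$, $\bar\rho\in[0,1)$, for $k=1,2,\dots$: (1) let $v_k$ be a minimizer of $g(v)+\langle z_{k-1}+\lambda w_{k-1},Cv-d\rangle+\frac\lambda2\|Cv-d\|^2$ and $u_k$ a minimizer of $f(u)+\langle z_{k-1}+\lambda(Cv_k-d),Mu\rangle+\frac\lambda2\|Mu\|^2$;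 (2) if $\|Mu_k+Cv_k-d\|+\|Mu_k-w_{k-1}\|=0$ stop; otherwise set $\gamma_k=\dfrac{\lambda\|Cv_k-d+w_{k-1}\|^2+\lambda\langle d-Cv_k-Mu_k,w_{k-1}-Mu_k\rangle}{\|Mu_k+Cv_k-d\|^2+\lambda^2\|Mu_k-w_{k-1}\|^2}$; (3) choose $\rho_k\in[1-\bar\rho,1+\bar\rho]$ and set $z_k=z_{k-1}+\rho_k\gamma_k(Mu_k+Cv_k-d)$, $w_k=w_{k-1}-\rho_k\gamma_k\lambda(w_{k-1}-Mu_k)$. *)

theory Defs
  imports "HOL-Analysis.Analysis"
begin

definition proper_fun :: "('a \<Rightarrow> ereal) \<Rightarrow> bool" where
  "proper_fun f \<longleftrightarrow> (\<forall>x. f x \<noteq> -\<infinity>) \<and> (\<exists>x. f x \<noteq> \<infinity>)"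

definition epigraph :: "('a \<Rightarrow> ereal) \<Rightarrow> ('a \<times> real) set" where
  "epigraph f = {(x, t). f x \<le> ereal t}"

definition convex_fun :: "('a::real_vector \<Rightarrow> ereal) \<Rightarrow> bool" where
  "convex_fun f \<longleftrightarrow> convex (epigraph f)"

definition closed_fun :: "('a::real_normed_vector \<Rightarrow> ereal) \<Rightarrow> bool" where
  "closed_fun f \<longleftrightarrow> closed (epigraph f)"

definition proper_closed_convex :: "('a::real_normed_vector \<Rightarrow> ereal) \<Rightarrow> bool" where
  "proper_closed_convex f \<longleftrightarrow> proper_fun f \<and> closed_fun f \<and> convex_fun f"

definition fenchel_conj :: "('a::real_inner \<Rightarrow> ereal) \<Rightarrow> 'a \<Rightarrow> ereal" where
  "fenchel_conj f s = (SUP x. ereal (s \<bullet> x) - f x)"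

definition edom :: "('a \<Rightarrow> ereal) \<Rightarrow> 'a set" where
  "edom f = {x. f x < \<infinity>}"

definition eps_subdiff :: "real \<Rightarrow> ('a::real_inner \<Rightarrow> ereal) \<Rightarrow> 'a \<Rightarrow> 'a set" where
  "eps_subdiff eps \<theta> x = {s. \<forall>x'. \<theta> x' \<ge> \<theta> x + ereal (s \<bullet> (x' - x) - eps)}"

definition lagrangian ::
  "('a::real_inner \<Rightarrow> ereal) \<Rightarrow> ('b::real_inner \<Rightarrow> ereal) \<Rightarrow> ('a \<Rightarrow> 'c::real_inner) \<Rightarrow> ('b \<Rightarrow> 'c) \<Rightarrow> 'c
    \<Rightarrow> 'a \<Rightarrow> 'b \<Rightarrow> 'c \<Rightarrow> ereal" where
  "lagrangian f g M C d u v z = f u + g v + ereal ((M u + C v - d) \<bullet> z)"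

definition saddle_point where
  "saddle_point f g M C d u0 v0 z0 \<longleftrightarrow>
     \<bar>lagrangian f g M C d u0 v0 z0\<bar> \<noteq> \<infinity> \<and>
     (\<forall>u v. lagrangian f g M C d u0 v0 z0 \<le> lagrangian f g M C d u v z0) \<and>
     (\<forall>z. lagrangian f g M C d u0 v0 z \<le> lagrangian f g M C d u0 v0 z0)"

definition PMM_run ::
  "('a::euclidean_space \<Rightarrow> ereal) \<Rightarrow> ('b::euclidean_space \<Rightarrow> ereal) \<Rightarrow> ('a \<Rightarrow> 'c::euclidean_space) \<Rightarrow> ('b \<Rightarrow> 'c) \<Rightarrow> 'c
    \<Rightarrow> real \<Rightarrow> real \<Rightarrow> (nat \<Rightarrow> 'a) \<Rightarrow> (nat \<Rightarrow> 'b) \<Rightarrow> (nat \<Rightarrow> 'c) \<Rightarrow> (nat \<Rightarrow> 'c)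
    \<Rightarrow> (nat \<Rightarrow> real) \<Rightarrow> (nat \<Rightarrow> real) \<Rightarrow> bool" where
  "PMM_run f g M C d lam \<rho>bar u v z w \<gamma> \<rho> \<longleftrightarrow>
     lam > 0 \<and> 0 \<le> \<rho>bar \<and> \<rho>bar < 1 \<and>
     (\<forall>k\<ge>1.
        (\<forall>v'. g (v k) + ereal ((z (k-1) + lam *\<^sub>R w (k-1)) \<bullet> (C (v k) - d)) + ereal (lam/2 * (norm (C (v k) - d))\<^sup>2)
             \<le> g v' + ereal ((z (k-1) + lam *\<^sub>R w (k-1)) \<bullet> (C v' - d)) + ereal (lam/2 * (norm (C v' - d))\<^sup>2)) \<and>
        (\<forall>u'. f (u k) + ereal ((z (k-1) + lam *\<^sub>R (C (v k) - d)) \<bullet> M (u k)) + ereal (lam/2 * (norm (M (u k)))\<^sup>2)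
             \<le> f u' + ereal ((z (k-1) + lam *\<^sub>R (C (v k) - d)) \<bullet> M u') + ereal (lam/2 * (norm (M u'))\<^sup>2)) \<and>
        norm (M (u k) + C (v k) - d) + norm (M (u k) - w (k-1)) \<noteq> 0 \<and>
        \<gamma> k = (lam * (norm (C (v k) - d + w (k-1)))\<^sup>2 + lam * ((d - C (v k) - M (u k)) \<bullet> (w (k-1) - M (u k))))
               / ((norm (M (u k) + C (v k) - d))\<^sup>2 + lam\<^sup>2 * (norm (M (u k) - w (k-1)))\<^sup>2) \<and>
        1 - \<rho>bar \<le> \<rho> k \<and> \<rho> k \<le> 1 + \<rho>bar \<and>
        z k = z (k-1) + (\<rho> k * \<gamma> k) *\<^sub>R (M (u k) + C (v k) - d) \<and>
        w k = w (k-1) - (\<rho> k * \<gamma> k * lam) *\<^sub>R (w (k-1) - M (u k)))"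

end

theory Submission imports Defs begin

lemma real_aux:
  fixes P G ca cb aa ab bb lam :: real
  assumes l: "lam \<ge> 0" and sq: "aa - 2*ab + bb \<ge> 0"
  and H: "\<And>t. 0 < t \<Longrightarrow> t \<le> 1 \<Longrightarrow> P + ca + lam/2*aa \<le> (1-t)*P + t*G + ((1-t)*ca + t*cb) + lam/2*((1-t)^2*aa + 2*t*(1-t)*ab + t^2*bb)"
  shows "G \<ge> P + ca - cb + lam*(aa - ab)"
proof (rule ccontr)
  assume nt: "\<not> ?thesis"
  define D where "D = G - P - ca + cb - lam*(aa-ab)"
  define K where "K = lam/2*(aa - 2*ab + bb)"
  have D: "D < 0" using nt by (simp add: D_def)
  have K: "K \<ge> 0" using l sq by (simp add: K_def)
  have T: "t*D + t^2*K \<ge> 0" if "0 < t" "t \<le> 1" for t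
  proof -
    have "(1-t)*P + t*G + ((1-t)*ca + t*cb) + lam/2*((1-t)^2*aa + 2*t*(1-t)*ab + t^2*bb) - (P + ca + lam/2*aa) = t*D + t^2*K"
      by (simp add: D_def K_def power2_eq_square algebra_simps)
    then show ?thesis using H[OF that] by linarith
  qed
  define t where "t = min 1 (-D/(2*K+1))"
  have t0: "0 < t" "t \<le> 1" using D K by (auto simp: t_def divide_neg_pos)
  have "t*K \<le> (-D/(2*K+1))*K" unfolding t_def using K by (intro mult_right_mono) auto
  also have "\<dots> < -D" using D K mult_nonpos_nonneg[of D K] by (simp add: field_simps)
  finally have "t*K < -D" .
  hence "t*(D + t*K) < 0" using t0 by (simp add: mult_pos_neg)
  with T[OF t0] show False by (simp add: power2_eq_square algebra_simps)
qed

lemma sub_min: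
  fixes g :: "'b::euclidean_space \<Rightarrow> ereal" and C :: "'b \<Rightarrow> 'c::euclidean_space"
  assumes pcc: "proper_closed_convex g" and lin: "linear C" and lam: "lam \<ge> 0"
  and mn: "\<And>q. g p + ereal (c \<bullet> (C p - d)) + ereal (lam/2 * (norm (C p - d))\<^sup>2) \<le> g q + ereal (c \<bullet> (C q - d)) + ereal (lam/2 * (norm (C q - d))\<^sup>2)"
  shows "\<exists>P. g p = ereal P \<and> (\<forall>q. g q \<ge> ereal (P + (- adjoint C (c + lam *\<^sub>R (C p - d))) \<bullet> (q - p)))"
proof -
  have pr: "proper_fun g" and cv: "convex (epigraph g)" using pcc
    by (auto simp: proper_closed_convex_def convex_fun_def)
  obtain q0 where q0: "g q0 \<noteq> \<infinity>" using pr by (auto simp: proper_fun_def)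
  have nm: "\<And>x. g x \<noteq> -\<infinity>" using pr by (auto simp: proper_fun_def)
  have "g p \<noteq> \<infinity>"
  proof
    assume "g p = \<infinity>"
    with mn[of q0] q0 nm[of q0] show False by auto
  qed
  then obtain P where P: "g p = ereal P" using nm[of p] by (cases "g p") auto
  have "\<forall>q. g q \<ge> ereal (P + (- adjoint C (c + lam *\<^sub>R (C p - d))) \<bullet> (q - p))"
  proof
    fix q
    show "g q \<ge> ereal (P + (- adjoint C (c + lam *\<^sub>R (C p - d))) \<bullet> (q - p))"
    proof (cases "g q = \<infinity>")
      case True then show ?thesis by simp
    next
      case False
      then obtain G where G: "g q = ereal G" using nm[of q] by (cases "g q") auto
      define a where "a = C p - d"
      define b where "b = C q - d"
      have H: "P + c \<bullet> a + lam/2*(a \<bullet> a) \<le> (1-t)*P + t*G + ((1-t)*(c \<bullet> a) + t*(c \<bullet> b))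
          + lam/2*((1-t)^2*(a \<bullet> a) + 2*t*(1-t)*(a \<bullet> b) + t^2*(b \<bullet> b))" if t: "0 < t" "t \<le> 1" for t
      proof -
        define qt where "qt = (1-t) *\<^sub>R p + t *\<^sub>R q"
        have "(1-t) *\<^sub>R (p, P) + t *\<^sub>R (q, G) \<in> epigraph g"
          using cv t P G by (intro convexD) (auto simp: epigraph_def)
        hence gq: "g qt \<le> ereal ((1-t)*P + t*G)" by (simp add: epigraph_def qt_def)
        have Cqt: "C qt - d = (1-t) *\<^sub>R a + t *\<^sub>R b"
        proof -
          have "C qt = (1-t) *\<^sub>R C p + t *\<^sub>R C q"
            unfolding qt_def by (simp only: linear_add[OF lin] linear_scale[OF lin])
          thus ?thesis by (simp add: a_def b_def algebra_simps)
        qed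
        have e1: "c \<bullet> (C qt - d) = (1-t)*(c \<bullet> a) + t*(c \<bullet> b)"
          by (simp add: Cqt inner_add_right)
        have e2: "(norm (C qt - d))\<^sup>2 = (1-t)^2*(a \<bullet> a) + 2*t*(1-t)*(a \<bullet> b) + t^2*(b \<bullet> b)"
        proof -
          have "(norm (C qt - d))\<^sup>2 = ((1-t) *\<^sub>R a + t *\<^sub>R b) \<bullet> ((1-t) *\<^sub>R a + t *\<^sub>R b)"
            by (simp only: Cqt power2_norm_eq_inner)
          also have "\<dots> = (1-t)^2*(a \<bullet> a) + 2*t*(1-t)*(a \<bullet> b) + t^2*(b \<bullet> b)"
            by (simp add: inner_add_left inner_add_right inner_commute[of b a] power2_eq_square algebra_simps)
          finally show ?thesis .
        qed
        have e3: "(norm (C p - d))\<^sup>2 = a \<bullet> a" by (simp add: a_def power2_norm_eq_inner)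
        have "ereal (P + c \<bullet> a + lam/2*(a \<bullet> a)) = g p + ereal (c \<bullet> (C p - d)) + ereal (lam/2 * (norm (C p - d))\<^sup>2)"
          by (simp add: P e3 a_def)
        also have "\<dots> \<le> g qt + ereal (c \<bullet> (C qt - d)) + ereal (lam/2 * (norm (C qt - d))\<^sup>2)" by (rule mn)
        also have "\<dots> \<le> ereal ((1-t)*P + t*G) + ereal (c \<bullet> (C qt - d)) + ereal (lam/2 * (norm (C qt - d))\<^sup>2)"
          using gq by (intro add_right_mono)
        finally show ?thesis by (simp add: e1 e2)
      qed
      have sq: "a \<bullet> a - 2*(a \<bullet> b) + b \<bullet> b \<ge> 0"
      proof -
        have "0 \<le> (a - b) \<bullet> (a - b)" by simp
        thus ?thesis by (simp add: inner_diff_left inner_diff_right inner_commute[of b a])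
      qed
      have R: "G \<ge> P + c \<bullet> a - c \<bullet> b + lam*(a \<bullet> a - a \<bullet> b)"
        by (rule real_aux[OF lam sq H]) auto
      have "(- adjoint C (c + lam *\<^sub>R (C p - d))) \<bullet> (q - p) = - ((c + lam *\<^sub>R a) \<bullet> (b - a))"
        by (simp add: adjoint_clauses(2)[OF lin] a_def b_def linear_diff[OF lin])
      also have "\<dots> = c \<bullet> a - c \<bullet> b + lam*(a \<bullet> a - a \<bullet> b)"
        by (simp add: inner_add_left inner_diff_right algebra_simps)
      finally show ?thesis using R G by simp
    qed
  qed
  with P show ?thesis by blast
qed

lemma ergodic:
  fixes g :: "'b::euclidean_space \<Rightarrow> ereal" and p s :: "nat \<Rightarrow> 'b"
  assumes cvx: "convex_fun g" and fin: "finite A" and a0: "\<And>j. j\<in>A \<Longrightarrow> a j \<ge> 0" and a1: "sum a A = 1"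
   and G: "\<And>j. j\<in>A \<Longrightarrow> g (p j) = ereal (G j)"
   and sub: "\<And>j q. j\<in>A \<Longrightarrow> g q \<ge> ereal (G j + s j \<bullet> (q - p j))"
  shows "(\<Sum>j\<in>A. a j * ((p j - (\<Sum>i\<in>A. a i *\<^sub>R p i)) \<bullet> s j)) \<ge> 0 \<and>
         (\<Sum>j\<in>A. a j *\<^sub>R s j) \<in> eps_subdiff (\<Sum>j\<in>A. a j * ((p j - (\<Sum>i\<in>A. a i *\<^sub>R p i)) \<bullet> s j)) g (\<Sum>i\<in>A. a i *\<^sub>R p i)"
proof -
  define pb where "pb = (\<Sum>i\<in>A. a i *\<^sub>R p i)"
  define sb where "sb = (\<Sum>j\<in>A. a j *\<^sub>R s j)"
  define eps where "eps = (\<Sum>j\<in>A. a j * ((p j - pb) \<bullet> s j))"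
  define GA where "GA = (\<Sum>j\<in>A. a j * G j)"
  have cv: "convex (epigraph g)" using cvx by (simp add: convex_fun_def)
  have "(\<Sum>j\<in>A. a j *\<^sub>R (p j, G j)) \<in> epigraph g"
    using fin cv a1 a0 G by (intro convex_sum) (auto simp: epigraph_def)
  moreover have "(\<Sum>j\<in>A. a j *\<^sub>R (p j, G j)) = (pb, GA)"
    by (rule prod_eqI) (simp_all add: fst_sum snd_sum pb_def GA_def)
  ultimately have jen: "g pb \<le> ereal GA" by (simp add: epigraph_def)
  have lin_avg: "(\<Sum>j\<in>A. a j * (G j + s j \<bullet> (q - p j))) = GA + sb \<bullet> (q - pb) - eps" for q
  proof -
    have e: "s j \<bullet> (q - p j) = s j \<bullet> (q - pb) - (p j - pb) \<bullet> s j" for j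
      by (subst inner_commute[of "p j - pb"]) (simp add: inner_diff_right)
    have "(\<Sum>j\<in>A. a j * (G j + s j \<bullet> (q - p j))) = (\<Sum>j\<in>A. a j * G j + a j * (s j \<bullet> (q - pb)) - a j * ((p j - pb) \<bullet> s j))"
      by (simp only: e distrib_left right_diff_distrib add_diff_eq)
    also have "\<dots> = GA + (\<Sum>j\<in>A. a j * (s j \<bullet> (q - pb))) - eps"
      by (simp add: GA_def eps_def sum.distrib sum_subtractf)
    finally have "(\<Sum>j\<in>A. a j * (G j + s j \<bullet> (q - p j))) = GA + (\<Sum>j\<in>A. a j * (s j \<bullet> (q - pb))) - eps" .
    also have "(\<Sum>j\<in>A. a j * (s j \<bullet> (q - pb))) = sb \<bullet> (q - pb)"
      by (simp add: sb_def inner_sum_left)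
    finally show ?thesis .
  qed
  have eps0: "eps \<ge> 0"
  proof -
    have step: "GA \<ge> G j + s j \<bullet> (pb - p j)" if j: "j \<in> A" for j
    proof -
      have "(\<Sum>i\<in>A. a i * (G j + s j \<bullet> (p i - p j))) \<le> GA"
        unfolding GA_def
      proof (rule sum_mono)
        fix i assume i: "i \<in> A"
        have "ereal (G j + s j \<bullet> (p i - p j)) \<le> ereal (G i)" using sub[OF j, of "p i"] G[OF i] by simp
        thus "a i * (G j + s j \<bullet> (p i - p j)) \<le> a i * G i" using a0[OF i] by (simp add: mult_left_mono)
      qed
      also have "(\<Sum>i\<in>A. a i * (G j + s j \<bullet> (p i - p j))) = G j + s j \<bullet> (pb - p j)"
      proof -
        have "(\<Sum>i\<in>A. a i * (G j + s j \<bullet> (p i - p j))) = G j * sum a A + s j \<bullet> (\<Sum>i\<in>A. a i *\<^sub>R p i) - (s j \<bullet> p j) * sum a A"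
          by (simp add: algebra_simps sum.distrib sum_subtractf sum_distrib_left sum_distrib_right inner_sum_right inner_diff_right)
        thus ?thesis using a1 by (simp add: pb_def inner_diff_right)
      qed
      finally show ?thesis .
    qed
    have "(\<Sum>j\<in>A. a j * (G j + s j \<bullet> (pb - p j))) \<le> (\<Sum>j\<in>A. a j * GA)"
      by (rule sum_mono) (simp add: a0 step mult_left_mono)
    also have "(\<Sum>j\<in>A. a j * GA) = GA" using a1 by (simp add: sum_distrib_right[symmetric])
    finally have "GA + sb \<bullet> (pb - pb) - eps \<le> GA" by (simp only: lin_avg)
    thus ?thesis by simp
  qed
  have "sb \<in> eps_subdiff eps g pb"
    unfolding eps_subdiff_def
  proof (intro CollectI allI)
    fix q
    show "g pb + ereal (sb \<bullet> (q - pb) - eps) \<le> g q"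
    proof (cases "g q = \<infinity>")
      case True then show ?thesis by simp
    next
      case False
      obtain j where j: "j \<in> A" using a1 by (metis sum.empty zero_neq_one ex_in_conv)
      have "g q \<noteq> -\<infinity>" using sub[OF j, of q] by auto
      with False obtain Gq where Gq: "g q = ereal Gq" by (cases "g q") auto
      have "(\<Sum>j\<in>A. a j * (G j + s j \<bullet> (q - p j))) \<le> (\<Sum>j\<in>A. a j * Gq)"
      proof (rule sum_mono)
        fix i assume i: "i \<in> A"
        have "G i + s i \<bullet> (q - p i) \<le> Gq" using sub[OF i, of q] Gq by simp
        thus "a i * (G i + s i \<bullet> (q - p i)) \<le> a i * Gq" using a0[OF i] by (simp add: mult_left_mono)
      qed
      also have "(\<Sum>j\<in>A. a j * Gq) = Gq" using a1 by (simp add: sum_distrib_right[symmetric])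
      finally have r: "GA + (sb \<bullet> (q - pb) - eps) \<le> Gq" by (simp only: lin_avg)
      have "g pb + ereal (sb \<bullet> (q - pb) - eps) \<le> ereal GA + ereal (sb \<bullet> (q - pb) - eps)"
        using jen by (intro add_right_mono)
      also have "\<dots> \<le> g q" using r Gq by simp
      finally show ?thesis .
    qed
  qed
  with eps0 show ?thesis by (simp add: pb_def sb_def eps_def)
qed

lemma gamma_pos:
  fixes a b e :: "'c::real_inner"
  assumes lam: "lam > 0" and nz: "norm e + norm (- b) \<noteq> 0" and e: "e = a - b"
  shows "(lam * (norm a)\<^sup>2 + lam * ((b - a) \<bullet> b)) / ((norm e)\<^sup>2 + lam\<^sup>2 * (norm (- b))\<^sup>2) > 0"
proof -
  have ab: "a \<noteq> 0 \<or> b \<noteq> 0" using nz e by auto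
  have "0 \<le> (a - b) \<bullet> (a - b)" by simp
  hence ab2: "2*(a \<bullet> b) \<le> a \<bullet> a + b \<bullet> b" by (simp add: inner_diff_left inner_diff_right inner_commute[of b a])
  have pos: "a \<bullet> a + b \<bullet> b > 0" using ab
    by (metis add_pos_nonneg add_nonneg_pos inner_gt_zero_iff inner_ge_zero)
  have "(norm a)\<^sup>2 + (b - a) \<bullet> b > 0"
    using ab2 pos by (simp add: power2_norm_eq_inner inner_diff_left inner_commute[of b a])
  hence n: "lam * (norm a)\<^sup>2 + lam * ((b - a) \<bullet> b) > 0" using lam
    by (metis distrib_left mult_pos_pos)
  have "(norm e)\<^sup>2 + lam\<^sup>2 * (norm (- b))\<^sup>2 > 0"
  proof (cases "e = 0")
    case True then have "b \<noteq> 0" using nz by auto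
    then show ?thesis using lam by (simp add: True)
  next
    case False then show ?thesis using lam by (simp add: add_pos_nonneg)
  qed
  with n show ?thesis by simp
qed

theorem mainTheorem6:
  fixes f :: "'a::euclidean_space \<Rightarrow> ereal" and g :: "'b::euclidean_space \<Rightarrow> ereal"
    and M :: "'a \<Rightarrow> 'c::euclidean_space" and C :: "'b \<Rightarrow> 'c" and d :: 'c
    and lam \<rho>bar :: real
    and u :: "nat \<Rightarrow> 'a" and v :: "nat \<Rightarrow> 'b" and z w :: "nat \<Rightarrow> 'c"
    and \<gamma> \<rho> :: "nat \<Rightarrow> real"
    and x y :: "nat \<Rightarrow> 'c" and \<Gamma> :: "nat \<Rightarrow> real"
    and ubar :: "nat \<Rightarrow> 'a" and vbar :: "nat \<Rightarrow> 'b" and xbar ybar :: "nat \<Rightarrow> 'c"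
    and epsu epsv :: "nat \<Rightarrow> real"
    and k :: nat
  assumes f_pcc: "proper_closed_convex f" and g_pcc: "proper_closed_convex g"
    and M_lin: "linear M" and C_lin: "linear C"
    and A1: "\<exists>u0 v0 z0. saddle_point f g M C d u0 v0 z0"
    and A2: "rel_interior (edom (fenchel_conj f)) \<inter> range (adjoint M) \<noteq> {}"
    and A3: "rel_interior (edom (fenchel_conj g)) \<inter> range (adjoint C) \<noteq> {}"
    and run: "PMM_run f g M C d lam \<rho>bar u v z w \<gamma> \<rho>"
    and x_def: "\<And>j. x j = z (j-1) + lam *\<^sub>R w (j-1) + lam *\<^sub>R (C (v j) - d)"
    and y_def: "\<And>j. y j = x j - lam *\<^sub>R (w (j-1) - M (u j))"
    and Gamma_def: "\<And>k. \<Gamma> k = (\<Sum>j=1..k. \<rho> j * \<gamma> j)"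
    and ubar_def: "\<And>k. ubar k = (1 / \<Gamma> k) *\<^sub>R (\<Sum>j=1..k. (\<rho> j * \<gamma> j) *\<^sub>R u j)"
    and vbar_def: "\<And>k. vbar k = (1 / \<Gamma> k) *\<^sub>R (\<Sum>j=1..k. (\<rho> j * \<gamma> j) *\<^sub>R v j)"
    and xbar_def: "\<And>k. xbar k = (1 / \<Gamma> k) *\<^sub>R (\<Sum>j=1..k. (\<rho> j * \<gamma> j) *\<^sub>R x j)"
    and ybar_def: "\<And>k. ybar k = (1 / \<Gamma> k) *\<^sub>R (\<Sum>j=1..k. (\<rho> j * \<gamma> j) *\<^sub>R y j)"
    and epsu_def: "\<And>k. epsu k = (1 / \<Gamma> k) * (\<Sum>j=1..k. \<rho> j * \<gamma> j * ((u j - ubar k) \<bullet> (- adjoint M (y j))))"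
    and epsv_def: "\<And>k. epsv k = (1 / \<Gamma> k) * (\<Sum>j=1..k. \<rho> j * \<gamma> j * ((v j - vbar k) \<bullet> (- adjoint C (x j))))"
    and k1: "k \<ge> 1"
  shows "epsv k \<ge> 0 \<and> epsu k \<ge> 0 \<and>
         - adjoint C (xbar k) \<in> eps_subdiff (epsv k) g (vbar k) \<and>
         - adjoint M (ybar k) \<in> eps_subdiff (epsu k) f (ubar k)"
proof -
  have lam: "lam > 0" and rb: "\<rho>bar < 1" using run by (auto simp: PMM_run_def)
  have st: "\<And>j. j \<ge> 1 \<Longrightarrow>
        (\<forall>v'. g (v j) + ereal ((z (j-1) + lam *\<^sub>R w (j-1)) \<bullet> (C (v j) - d)) + ereal (lam/2 * (norm (C (v j) - d))\<^sup>2)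
             \<le> g v' + ereal ((z (j-1) + lam *\<^sub>R w (j-1)) \<bullet> (C v' - d)) + ereal (lam/2 * (norm (C v' - d))\<^sup>2)) \<and>
        (\<forall>u'. f (u j) + ereal ((z (j-1) + lam *\<^sub>R (C (v j) - d)) \<bullet> M (u j)) + ereal (lam/2 * (norm (M (u j)))\<^sup>2)
             \<le> f u' + ereal ((z (j-1) + lam *\<^sub>R (C (v j) - d)) \<bullet> M u') + ereal (lam/2 * (norm (M u'))\<^sup>2)) \<and>
        norm (M (u j) + C (v j) - d) + norm (M (u j) - w (j-1)) \<noteq> 0 \<and>
        \<gamma> j = (lam * (norm (C (v j) - d + w (j-1)))\<^sup>2 + lam * ((d - C (v j) - M (u j)) \<bullet> (w (j-1) - M (u j))))
               / ((norm (M (u j) + C (v j) - d))\<^sup>2 + lam\<^sup>2 * (norm (M (u j) - w (j-1)))\<^sup>2) \<and>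
        1 - \<rho>bar \<le> \<rho> j"
    using run unfolding PMM_run_def by blast
  have gpos: "\<gamma> j > 0" if j: "j \<ge> 1" for j
  proof -
    define a where "a = C (v j) - d + w (j-1)"
    define b where "b = w (j-1) - M (u j)"
    have e1: "d - C (v j) - M (u j) = b - a" by (simp add: a_def b_def algebra_simps)
    have e2: "M (u j) - w (j-1) = - b" by (simp add: b_def)
    have e3: "M (u j) + C (v j) - d = a - b" by (simp add: a_def b_def algebra_simps)
    have "\<gamma> j = (lam * (norm a)\<^sup>2 + lam * ((b - a) \<bullet> b)) / ((norm (M (u j) + C (v j) - d))\<^sup>2 + lam\<^sup>2 * (norm (- b))\<^sup>2)"
      using st[OF j] by (simp only: e1 e2 a_def[symmetric] b_def[symmetric])
    also have "\<dots> > 0"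
    proof (rule gamma_pos[OF lam _ e3])
      show "norm (M (u j) + C (v j) - d) + norm (- b) \<noteq> 0" using conjunct1[OF conjunct2[OF conjunct2[OF st[OF j]]]] by (metis e2)
    qed
    finally show ?thesis .
  qed
  have rpos: "\<rho> j > 0" if "j \<ge> 1" for j using st[OF that] rb by linarith
  have apos: "\<rho> j * \<gamma> j > 0" if "j \<ge> 1" for j using gpos[OF that] rpos[OF that] by simp
  have Gpos: "\<Gamma> k > 0" unfolding Gamma_def using k1 apos by (intro sum_pos) auto
  define a where "a j = \<rho> j * \<gamma> j / \<Gamma> k" for j
  have a0: "\<And>j. j \<in> {1..k} \<Longrightarrow> a j \<ge> 0" using apos Gpos by (auto simp: a_def intro!: divide_nonneg_pos less_imp_le)
  have a1: "sum a {1..k} = 1" using Gpos by (simp add: a_def Gamma_def sum_divide_distrib[symmetric])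
  have gpcc: "convex_fun g" "convex_fun f" using g_pcc f_pcc by (auto simp: proper_closed_convex_def)
  have vsub: "\<exists>P. g (v j) = ereal P \<and> (\<forall>q. g q \<ge> ereal (P + (- adjoint C (x j)) \<bullet> (q - v j)))" if j: "j \<ge> 1" for j
  proof -
    have "\<exists>P. g (v j) = ereal P \<and> (\<forall>q. g q \<ge> ereal (P + (- adjoint C ((z (j-1) + lam *\<^sub>R w (j-1)) + lam *\<^sub>R (C (v j) - d))) \<bullet> (q - v j)))"
      using st[OF j] lam by (intro sub_min[OF g_pcc C_lin]) auto
    thus ?thesis by (simp add: x_def)
  qed
  have usub: "\<exists>P. f (u j) = ereal P \<and> (\<forall>q. f q \<ge> ereal (P + (- adjoint M (y j)) \<bullet> (q - u j)))" if j: "j \<ge> 1" for j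
  proof -
    have "\<exists>P. f (u j) = ereal P \<and> (\<forall>q. f q \<ge> ereal (P + (- adjoint M ((z (j-1) + lam *\<^sub>R (C (v j) - d)) + lam *\<^sub>R (M (u j) - 0))) \<bullet> (q - u j)))"
      using st[OF j] lam by (intro sub_min[OF f_pcc M_lin]) auto
    moreover have "(z (j-1) + lam *\<^sub>R (C (v j) - d)) + lam *\<^sub>R (M (u j) - 0) = y j"
      by (simp add: y_def x_def algebra_simps)
    ultimately show ?thesis by simp
  qed
  define Gv where "Gv j = real_of_ereal (g (v j))" for j
  define Gu where "Gu j = real_of_ereal (f (u j))" for j
  have Gv: "g (v j) = ereal (Gv j) \<and> (\<forall>q. g q \<ge> ereal (Gv j + (- adjoint C (x j)) \<bullet> (q - v j)))" if "j \<in> {1..k}" for j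
    using vsub[of j] that by (auto simp: Gv_def)
  have Gu: "f (u j) = ereal (Gu j) \<and> (\<forall>q. f q \<ge> ereal (Gu j + (- adjoint M (y j)) \<bullet> (q - u j)))" if "j \<in> {1..k}" for j
    using usub[of j] that by (auto simp: Gu_def)
  note EV = ergodic[OF gpcc(1) finite_atLeastAtMost a0 a1, of v Gv "\<lambda>j. - adjoint C (x j)"]
  note EU = ergodic[OF gpcc(2) finite_atLeastAtMost a0 a1, of u Gu "\<lambda>j. - adjoint M (y j)"]
  have vb: "vbar k = (\<Sum>i\<in>{1..k}. a i *\<^sub>R v i)"
    by (simp add: vbar_def scaleR_sum_right a_def)
  have ub: "ubar k = (\<Sum>i\<in>{1..k}. a i *\<^sub>R u i)"
    by (simp add: ubar_def scaleR_sum_right a_def)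
  have lCa: "linear (adjoint C)" "linear (adjoint M)" using adjoint_linear C_lin M_lin by auto
  have xb: "- adjoint C (xbar k) = (\<Sum>j\<in>{1..k}. a j *\<^sub>R (- adjoint C (x j)))"
    by (simp add: xbar_def linear_scale[OF lCa(1)] linear_sum[OF lCa(1)] scaleR_sum_right a_def sum_negf[symmetric])
  have yb: "- adjoint M (ybar k) = (\<Sum>j\<in>{1..k}. a j *\<^sub>R (- adjoint M (y j)))"
    by (simp add: ybar_def linear_scale[OF lCa(2)] linear_sum[OF lCa(2)] scaleR_sum_right a_def sum_negf[symmetric])
  have ev: "epsv k = (\<Sum>j\<in>{1..k}. a j * ((v j - vbar k) \<bullet> (- adjoint C (x j))))"
    by (simp add: epsv_def sum_distrib_left a_def)
  have eu: "epsu k = (\<Sum>j\<in>{1..k}. a j * ((u j - ubar k) \<bullet> (- adjoint M (y j))))"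
    by (simp add: epsu_def sum_distrib_left a_def)
  have "epsv k \<ge> 0 \<and> - adjoint C (xbar k) \<in> eps_subdiff (epsv k) g (vbar k)"
    unfolding ev xb using EV Gv vb by auto
  moreover have "epsu k \<ge> 0 \<and> - adjoint M (ybar k) \<in> eps_subdiff (epsu k) f (ubar k)"
    unfolding eu yb using EU Gu ub by auto
  ultimately show ?thesis by blast
qed

end
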